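(* Every closed convex set $C\subseteq\mathbb{R}^n$ is $K$-outward minimizing in the ball $B(0,R)$ for every $R>0$.
   Context: Standing assumption: $K:\mathbb{R}^n\setminus\{0\}\to[0,+\infty)$ is measurable, $\min\{1,|x|\}K(x)\in L^1(\mathbb{R}^n)$ and $K(x)=K(-x)$. For measurable $E$ and open $\Omega$, $\mathrm{Per}_K(E,\Omega)=\int_E\int_{\Omega\setminus E}K(x-y)\,dx\,dy+\int_{E\cap\Omega}\int_{\mathbb{R}^n\setminus(\Omega\cup E)}K(x-y)\,dx\,dy$. $A\subset\subset\Omega$ means the closure of $A$ is a compact subset of $\Omega$. A set $E$ is $K$-outward minimizing in $\Omega$ if $\mathrm{Per}_K(E,\Omega)\le\mathrm{Per}_K(F,\Omega)$ for every measurable $F\supseteq E$ with $F\setminus E\subset\subset\Omega$. (It is known, and may be used, that half-spaces $\{x\cdot\nu\ge0\}$ are local minimizers of $\mathrm{Per}_K(\cdot,B(0,R))$ for every $R>0$.) *)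

theory Defs
  imports "HOL-Analysis.Analysis"
begin

definition admissible_kernel :: "('a::euclidean_space \<Rightarrow> real) \<Rightarrow> bool" where
  "admissible_kernel K \<longleftrightarrow>
     K \<in> borel_measurable lebesgue \<and>
     (\<forall>x. x \<noteq> 0 \<longrightarrow> K x \<ge> 0) \<and>
     integrable lebesgue (\<lambda>x. min 1 (norm x) * K x) \<and>
     (\<forall>x. x \<noteq> 0 \<longrightarrow> K (-x) = K x)"

definition perK :: "('a::euclidean_space \<Rightarrow> real) \<Rightarrow> 'a set \<Rightarrow> 'a set \<Rightarrow> ennreal" where
  "perK K E \<Omega> =
     (\<integral>\<^sup>+ x. indicator E x * (\<integral>\<^sup>+ y. indicator (\<Omega> - E) y * ennreal (K (x - y)) \<partial>lebesgue) \<partial>lebesgue)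
   + (\<integral>\<^sup>+ x. indicator (E \<inter> \<Omega>) x *
        (\<integral>\<^sup>+ y. indicator (UNIV - (\<Omega> \<union> E)) y * ennreal (K (x - y)) \<partial>lebesgue) \<partial>lebesgue)"

definition compactly_contained :: "'a::euclidean_space set \<Rightarrow> 'a set \<Rightarrow> bool" where
  "compactly_contained A \<Omega> \<longleftrightarrow> compact (closure A) \<and> closure A \<subseteq> \<Omega>"

definition outward_minimizing :: "('a::euclidean_space \<Rightarrow> real) \<Rightarrow> 'a set \<Rightarrow> 'a set \<Rightarrow> bool" where
  "outward_minimizing K E \<Omega> \<longleftrightarrow>
     (\<forall>F. F \<in> sets lebesgue \<and> E \<subseteq> F \<and> compactly_contained (F - E) \<Omega> \<longrightarrow>
          perK K E \<Omega> \<le> perK K F \<Omega>)"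

end

theory Submission
  imports Defs
begin

lemma chain_exists:
  fixes x z :: "'a::euclidean_space"
  assumes "bounded A" "z \<noteq> 0"
  shows "\<exists>k. x - real (Suc k) *\<^sub>R z \<notin> A"
proof (rule ccontr)
  assume "\<not> ?thesis"
  hence H: "\<And>k. x - real (Suc k) *\<^sub>R z \<in> A" by blast
  obtain B where B: "\<And>a. a \<in> A \<Longrightarrow> norm a \<le> B" using assms(1) bounded_iff by blast
  obtain k :: nat where k: "real k > (B + norm x) / norm z" using reals_Archimedean2 by blast
  have "norm (real (Suc k) *\<^sub>R z) \<le> norm (x - real (Suc k) *\<^sub>R z) + norm x"
    by (metis add.commute norm_triangle_sub minus_diff_eq norm_minus_commute)
  also have "\<dots> \<le> B + norm x" using B[OF H[of k]] by simp
  finally have "real (Suc k) * norm z \<le> B + norm x" by simp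
  moreover have "real k * norm z > B + norm x" using k assms(2) by (simp add: field_simps)
  ultimately show False using assms(2) by (simp add: algebra_simps) (smt (verit) norm_ge_zero)
qed

lemma aux_comb:
  fixes x z :: "'a::real_vector"
  assumes "t * c = 1"
  shows "x - z = (1 - t) *\<^sub>R x + t *\<^sub>R (x - c *\<^sub>R z)"
proof -
  have "(1 - t) *\<^sub>R x + t *\<^sub>R (x - c *\<^sub>R z) = x - (t * c) *\<^sub>R z"
    by (simp add: algebra_simps)
  then show ?thesis using assms by simp
qed

lemma core_ineq:
  fixes C A :: "'a::euclidean_space set" and z :: 'a
  assumes C: "C \<in> sets lebesgue" and A: "A \<in> sets lebesgue" and cv: "convex C"
    and bd: "bounded A" and dj: "A \<inter> C = {}"
  shows "emeasure lebesgue (C \<inter> {x. x - z \<in> A}) \<le> emeasure lebesgue (A \<inter> {x. x - z \<notin> C \<union> A})"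
proof (cases "z = 0")
  case True
  then have "C \<inter> {x. x - z \<in> A} = {}" using dj by auto
  then show ?thesis by simp
next
  case z: False
  define Q where "Q n = {x\<in>C. x - z \<in> A \<and> (\<forall>j<n. x - real (Suc j) *\<^sub>R z \<in> A) \<and> x - real (Suc n) *\<^sub>R z \<notin> A}" for n
  define T where "T n = (\<lambda>x. 1 *\<^sub>R x + (- (real n *\<^sub>R z))) ` Q n" for n
  have trans: "(\<lambda>x. x - c) -` S \<in> sets lebesgue" if "S \<in> sets lebesgue" for S and c :: 'a
  proof -
    have "(\<lambda>x. x - c) -` S = (\<lambda>x. c + x) ` S" by force
    then show ?thesis using lebesgue_sets_translation[OF that] by simp
  qed
  have compl: "- S \<in> sets lebesgue" if "S \<in> sets lebesgue" for S :: "'a set"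
    using sets.compl_sets[OF that] by (simp add: Compl_eq_Diff_UNIV)
  have Qm: "Q n \<in> sets lebesgue" for n
  proof -
    have "Q n = C \<inter> ((\<lambda>x. x - z) -` A) \<inter> (\<Inter>j\<in>{..<n}. (\<lambda>x. x - real (Suc j) *\<^sub>R z) -` A)
       \<inter> (- ((\<lambda>x. x - real (Suc n) *\<^sub>R z) -` A))"
      unfolding Q_def by auto
    also have "\<dots> \<in> sets lebesgue"
    proof (cases n)
      case 0 then show ?thesis using C A trans by (intro sets.Int compl) auto
    next
      case (Suc m)
      have "(\<lambda>x. x - real (Suc n) *\<^sub>R z) -` A \<in> sets lebesgue" using trans A by blast
      moreover have "(\<Inter>j\<in>{..<n}. (\<lambda>x. x - real (Suc j) *\<^sub>R z) -` A) \<in> sets lebesgue"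
        using Suc trans A by (intro sets.finite_INT) auto
      ultimately show ?thesis using C A trans by (intro sets.Int compl) auto
    qed
    finally show ?thesis .
  qed
  have Tm: "T n \<in> sets lebesgue" for n
  proof -
    have "T n = (\<lambda>x. (- (real n *\<^sub>R z)) + x) ` Q n" unfolding T_def by (simp add: add.commute)
    then show ?thesis using lebesgue_sets_translation[OF Qm, of "- (real n *\<^sub>R z)" n] by simp
  qed
  have TQ: "emeasure lebesgue (T n) = emeasure lebesgue (Q n)" for n
    unfolding T_def by (subst emeasure_lebesgue_affine) simp
  have sub1: "C \<inter> {x. x - z \<in> A} \<subseteq> (\<Union>n. Q n)"
  proof
    fix x assume x: "x \<in> C \<inter> {x. x - z \<in> A}"
    define n where "n = (LEAST k. x - real (Suc k) *\<^sub>R z \<notin> A)"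
    have ex: "\<exists>k. x - real (Suc k) *\<^sub>R z \<notin> A" by (rule chain_exists[OF bd z])
    have "x - real (Suc n) *\<^sub>R z \<notin> A" unfolding n_def by (rule LeastI_ex[OF ex])
    moreover have "\<forall>j<n. x - real (Suc j) *\<^sub>R z \<in> A" unfolding n_def using not_less_Least by blast
    ultimately have "x \<in> Q n" using x unfolding Q_def by auto
    then show "x \<in> (\<Union>n. Q n)" by blast
  qed
  have sub2: "(\<Union>n. T n) \<subseteq> A \<inter> {x. x - z \<notin> C \<union> A}"
  proof
    fix a assume "a \<in> (\<Union>n. T n)"
    then obtain n x where xQ: "x \<in> Q n" and a: "a = x - real n *\<^sub>R z" unfolding T_def by auto
    have xC: "x \<in> C" and x1: "x - z \<in> A" and xj: "\<And>j. j < n \<Longrightarrow> x - real (Suc j) *\<^sub>R z \<in> A"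
      and xn: "x - real (Suc n) *\<^sub>R z \<notin> A" using xQ unfolding Q_def by auto
    have n0: "n \<noteq> 0" using x1 xn by (cases n) auto
    then obtain m where m: "n = Suc m" by (cases n) auto
    have aA: "a \<in> A" using xj[of m] m a by simp
    have az: "a - z = x - real (Suc n) *\<^sub>R z" using a by (simp add: algebra_simps)
    moreover have "a - z \<notin> A" using xn az by simp
    moreover have "a - z \<notin> C"
    proof
      assume w: "a - z \<in> C"
      have tc: "(1 / real (Suc n)) * real (Suc n) = 1" by simp
      have eq: "x - z = (1 - 1 / real (Suc n)) *\<^sub>R x + (1 / real (Suc n)) *\<^sub>R (a - z)"
        unfolding az using aux_comb[OF tc] .
      have "x - z \<in> C"
        unfolding eq by (rule convexD[OF cv xC w]) (auto simp: field_simps)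
      then show False using x1 dj by auto
    qed
    ultimately show "a \<in> A \<inter> {x. x - z \<notin> C \<union> A}" using aA by auto
  qed
  have disj: "disjoint_family T"
  unfolding disjoint_family_on_def proof (intro ballI impI)
    fix n n' :: nat assume "n \<in> UNIV" "n' \<in> UNIV" "n \<noteq> n'"
    show "T n \<inter> T n' = {}"
    proof (rule ccontr)
      assume "T n \<inter> T n' \<noteq> {}"
      then obtain x x' where xQ: "x \<in> Q n" and xQ': "x' \<in> Q n'"
        and eq: "x - real n *\<^sub>R z = x' - real n' *\<^sub>R z" unfolding T_def by auto
      have key: False if "x \<in> Q n" "x' \<in> Q n'" "x - real n *\<^sub>R z = x' - real n' *\<^sub>R z" "n < n'"
        for x x' n n'
      proof -
        obtain j where j: "n' - n = Suc j" using \<open>n < n'\<close> by (metis Suc_diff_Suc)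
        have "j < n'" using j by linarith
        then have "x' - real (Suc j) *\<^sub>R z \<in> A" using that(2) unfolding Q_def by auto
        moreover have "x' - real (Suc j) *\<^sub>R z = x"
        proof -
          have "real (Suc j) = real n' - real n" using j \<open>n < n'\<close> by (simp add: of_nat_diff[symmetric])
          then have "x' - real (Suc j) *\<^sub>R z = x' - (real n' - real n) *\<^sub>R z" by simp
          also have "\<dots> = x' - real n' *\<^sub>R z + real n *\<^sub>R z" by (simp add: scaleR_diff_left)
          also have "\<dots> = x" using that(3) by (metis diff_add_cancel)
          finally show ?thesis .
        qed
        moreover have "x \<in> C" using that(1) unfolding Q_def by auto
        ultimately show False using dj by auto
      qed
      show False
      proof (cases "n < n'")
        case True then show ?thesis using key[OF xQ xQ' eq] by simp
      next
        case False then have "n' < n" using \<open>n \<noteq> n'\<close> by simp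
        then show ?thesis using key[OF xQ' xQ eq[symmetric]] by simp
      qed
    qed
  qed
  have "emeasure lebesgue (C \<inter> {x. x - z \<in> A}) \<le> emeasure lebesgue (\<Union>n. Q n)"
    using sub1 Qm by (intro emeasure_mono) auto
  also have "\<dots> \<le> (\<Sum>n. emeasure lebesgue (Q n))"
    using Qm by (intro emeasure_subadditive_countably) auto
  also have "\<dots> = (\<Sum>n. emeasure lebesgue (T n))" by (simp add: TQ)
  also have "\<dots> = emeasure lebesgue (\<Union>n. T n)"
    using Tm disj by (intro suminf_emeasure) auto
  also have "\<dots> \<le> emeasure lebesgue (A \<inter> {x. x - z \<notin> C \<union> A})"
  proof (rule emeasure_mono[OF sub2])
    have "A \<inter> {x. x - z \<notin> C \<union> A} = A \<inter> - ((\<lambda>x. x - z) -` (C \<union> A))" by auto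
    then show "A \<inter> {x. x - z \<notin> C \<union> A} \<in> sets lebesgue" using trans A C compl by auto
  qed
  finally show ?thesis .
qed

lemma nn_integral_reflect:
  fixes f :: "'a::euclidean_space \<Rightarrow> ennreal" and x :: 'a
  assumes f: "f \<in> borel_measurable borel"
  shows "(\<integral>\<^sup>+y. f y \<partial>lborel) = (\<integral>\<^sup>+z. f (x - z) \<partial>lborel)"
proof -
  let ?T = "\<lambda>z. x + (-1) *\<^sub>R z"
  have Tm: "?T \<in> borel \<rightarrow>\<^sub>M borel" by simp
  have "(\<integral>\<^sup>+y. f y \<partial>lborel) = (\<integral>\<^sup>+y. f y \<partial>density (distr lborel borel ?T) (\<lambda>_. \<bar>-1::real\<bar> ^ DIM('a)))"
    by (subst (1) lborel_affine[of "-1" x]) simp_all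
  also have "\<dots> = (\<integral>\<^sup>+y. f y \<partial>distr lborel borel ?T)"
    using f by (subst nn_integral_density) auto
  also have "\<dots> = (\<integral>\<^sup>+z. f (?T z) \<partial>lborel)"
    using f Tm by (subst nn_integral_distr) auto
  finally show ?thesis by simp
qed

lemma null_reflect:
  fixes N :: "'a::euclidean_space set" and x :: 'a
  assumes N: "N \<in> null_sets lborel"
  shows "{y. x - y \<in> N} \<in> null_sets lborel"
proof -
  have Nb: "N \<in> sets borel" using N by (auto simp: null_sets_def)
  have mb: "{y. x - y \<in> N} \<in> sets borel"
  proof -
    have "{y. x - y \<in> N} = (\<lambda>y. x - y) -` N \<inter> space borel" by auto
    also have "\<dots> \<in> sets borel" using Nb by (intro measurable_sets[of _ borel]) auto
    finally show ?thesis .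
  qed
  have "emeasure lborel N = (\<integral>\<^sup>+y. indicator N y \<partial>lborel)" using Nb by simp
  also have "\<dots> = (\<integral>\<^sup>+z. indicator N (x - z) \<partial>lborel)"
    using Nb by (intro nn_integral_reflect) auto
  also have "\<dots> = (\<integral>\<^sup>+z. indicator {y. x - y \<in> N} z \<partial>lborel)"
    by (intro nn_integral_cong) (auto simp: indicator_def)
  also have "\<dots> = emeasure lborel {y. x - y \<in> N}" using mb by simp
  finally show ?thesis using N mb by (auto simp: null_sets_def)
qed

lemma convert:
  fixes g g' :: "'a::euclidean_space \<Rightarrow> ennreal" and X Y :: "'a set"
  assumes X[measurable]: "X \<in> sets borel" and Y[measurable]: "Y \<in> sets borel"
    and g'[measurable]: "g' \<in> borel_measurable borel" and ae: "AE z in lborel. g z = g' z"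
  shows "(\<integral>\<^sup>+x. indicator X x * (\<integral>\<^sup>+y. indicator Y y * g (x - y) \<partial>lebesgue) \<partial>lebesgue)
       = (\<integral>\<^sup>+z. (\<integral>\<^sup>+x. indicator X x * (indicator Y (x - z) * g' z) \<partial>lborel) \<partial>lborel)"
proof -
  have inner: "(\<integral>\<^sup>+y. indicator Y y * g (x - y) \<partial>lborel) = (\<integral>\<^sup>+z. indicator Y (x - z) * g' z \<partial>lborel)" for x
  proof -
    obtain N where N: "N \<in> null_sets lborel" "{z \<in> space lborel. \<not> g z = g' z} \<subseteq> N"
      using ae unfolding eventually_ae_filter by blast
    have "AE y in lborel. y \<notin> {y. x - y \<in> N}" by (rule AE_not_in[OF null_reflect[OF N(1)]])
    then have "AE y in lborel. g (x - y) = g' (x - y)"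
      by eventually_elim (use N(2) in auto)
    then have "(\<integral>\<^sup>+y. indicator Y y * g (x - y) \<partial>lborel) = (\<integral>\<^sup>+y. indicator Y y * g' (x - y) \<partial>lborel)"
      by (intro nn_integral_cong_AE) (auto elim!: eventually_mono)
    also have "\<dots> = (\<integral>\<^sup>+z. indicator Y (x - z) * g' (x - (x - z)) \<partial>lborel)"
      by (intro nn_integral_reflect) measurable
    finally show ?thesis by simp
  qed
  have "(\<integral>\<^sup>+x. indicator X x * (\<integral>\<^sup>+y. indicator Y y * g (x - y) \<partial>lebesgue) \<partial>lebesgue)
      = (\<integral>\<^sup>+x. indicator X x * (\<integral>\<^sup>+y. indicator Y y * g (x - y) \<partial>lborel) \<partial>lborel)"
    by (simp only: nn_integral_completion)
  also have "\<dots> = (\<integral>\<^sup>+x. indicator X x * (\<integral>\<^sup>+z. indicator Y (x - z) * g' z \<partial>lborel) \<partial>lborel)"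
    by (simp only: inner)
  also have "\<dots> = (\<integral>\<^sup>+x. (\<integral>\<^sup>+z. indicator X x * (indicator Y (x - z) * g' z) \<partial>lborel) \<partial>lborel)"
    by (intro nn_integral_cong nn_integral_cmult[symmetric]) measurable
  also have "\<dots> = (\<integral>\<^sup>+z. (\<integral>\<^sup>+x. indicator X x * (indicator Y (x - z) * g' z) \<partial>lborel) \<partial>lborel)"
    by (rule lborel_pair.Fubini'[symmetric]) measurable
  finally show ?thesis .
qed

lemma inner_emeasure:
  fixes g' :: "'a::euclidean_space \<Rightarrow> ennreal" and X Y :: "'a set"
  assumes X[measurable]: "X \<in> sets borel" and Y[measurable]: "Y \<in> sets borel"
  shows "(\<integral>\<^sup>+x. indicator X x * (indicator Y (x - z) * g' z) \<partial>lborel)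
       = g' z * emeasure lebesgue (X \<inter> {x. x - z \<in> Y})"
proof -
  have S: "X \<inter> {x. x - z \<in> Y} \<in> sets borel" by measurable
  have "(\<integral>\<^sup>+x. indicator X x * (indicator Y (x - z) * g' z) \<partial>lborel)
      = (\<integral>\<^sup>+x. g' z * indicator (X \<inter> {x. x - z \<in> Y}) x \<partial>lborel)"
    by (intro nn_integral_cong) (auto simp: indicator_def)
  also have "\<dots> = g' z * emeasure lborel (X \<inter> {x. x - z \<in> Y})"
    using S by (intro nn_integral_cmult_indicator) simp
  also have "\<dots> = g' z * emeasure lebesgue (X \<inter> {x. x - z \<in> Y})"
    using S by simp
  finally show ?thesis .
qed

lemma perK_form:
  fixes K :: "'a::euclidean_space \<Rightarrow> real" and g' :: "'a \<Rightarrow> ennreal"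
  assumes E[measurable]: "E \<in> sets borel" and O[measurable]: "\<Omega> \<in> sets borel"
    and g'[measurable]: "g' \<in> borel_measurable borel" and ae: "AE z in lborel. ennreal (K z) = g' z"
  shows "perK K E \<Omega> = (\<integral>\<^sup>+z. g' z * emeasure lebesgue (E \<inter> {x. x - z \<in> \<Omega> - E})
            + g' z * emeasure lebesgue ((E \<inter> \<Omega>) \<inter> {x. x - z \<in> UNIV - (\<Omega> \<union> E)}) \<partial>lborel)"
proof -
  have "perK K E \<Omega> =
     (\<integral>\<^sup>+z. (\<integral>\<^sup>+x. indicator E x * (indicator (\<Omega> - E) (x - z) * g' z) \<partial>lborel) \<partial>lborel)
   + (\<integral>\<^sup>+z. (\<integral>\<^sup>+x. indicator (E \<inter> \<Omega>) x * (indicator (UNIV - (\<Omega> \<union> E)) (x - z) * g' z) \<partial>lborel) \<partial>lborel)"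
    unfolding perK_def
    by (subst convert[where g="\<lambda>z. ennreal (K z)" and g'=g', OF _ _ g' ae], measurable)+
  also have "\<dots> = (\<integral>\<^sup>+z. (\<integral>\<^sup>+x. indicator E x * (indicator (\<Omega> - E) (x - z) * g' z) \<partial>lborel)
      + (\<integral>\<^sup>+x. indicator (E \<inter> \<Omega>) x * (indicator (UNIV - (\<Omega> \<union> E)) (x - z) * g' z) \<partial>lborel) \<partial>lborel)"
    by (rule nn_integral_add[symmetric]) measurable
  also have "\<dots> = (\<integral>\<^sup>+z. g' z * emeasure lebesgue (E \<inter> {x. x - z \<in> \<Omega> - E})
            + g' z * emeasure lebesgue ((E \<inter> \<Omega>) \<inter> {x. x - z \<in> UNIV - (\<Omega> \<union> E)}) \<partial>lborel)"
    by (intro nn_integral_cong arg_cong2[where f="(+)"] inner_emeasure) measurable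
  finally show ?thesis .
qed

lemma pre_borel:
  fixes Y :: "'a::euclidean_space set"
  assumes "Y \<in> sets borel"
  shows "{x. x - z \<in> Y} \<in> sets borel"
proof -
  have "{x. x - z \<in> Y} = (\<lambda>x. x - z) -` Y \<inter> space borel" by auto
  also have "\<dots> \<in> sets borel" using assms by (intro measurable_sets[of _ borel]) auto
  finally show ?thesis .
qed

lemma ennreal_mix:
  fixes c a b u v :: ennreal
  assumes "a + b \<le> u + v"
  shows "c * a + c * b \<le> c * u + c * v"
proof -
  have "c * (a + b) \<le> c * (u + v)" using assms by (rule mult_left_mono) simp
  then show ?thesis by (simp add: distrib_left)
qed

lemma borel_case:
  fixes K :: "'a::euclidean_space \<Rightarrow> real"
  assumes K: "K \<in> borel_measurable lebesgue"
    and C: "C \<in> sets borel" and A: "A \<in> sets borel" and O: "\<Omega> \<in> sets borel"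
    and cv: "convex C" and bd: "bounded A" and dj: "A \<inter> C = {}" and AO: "A \<subseteq> \<Omega>"
  shows "perK K C \<Omega> \<le> perK K (C \<union> A) \<Omega>"
proof -
  have gm: "(\<lambda>z. ennreal (K z)) \<in> borel_measurable (completion lborel)"
    using measurable_compose[OF K measurable_ennreal] by simp
  obtain g' where g': "g' \<in> borel_measurable lborel" and ae: "AE z in lborel. ennreal (K z) = g' z"
    using completion_ex_borel_measurable[OF gm] by blast
  have g'b: "g' \<in> borel_measurable borel" using g' by simp
  let ?F = "C \<union> A"
  have F: "?F \<in> sets borel" using C A by auto
  let ?m = "\<lambda>X Y z. emeasure lebesgue (X \<inter> {x. x - z \<in> Y})"
  have pw: "?m C (\<Omega> - C) z + ?m (C \<inter> \<Omega>) (UNIV - (\<Omega> \<union> C)) z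
        \<le> ?m ?F (\<Omega> - ?F) z + ?m (?F \<inter> \<Omega>) (UNIV - (\<Omega> \<union> ?F)) z" for z
  proof -
    define S1 where "S1 = C \<inter> {x. x - z \<in> \<Omega> - ?F}"
    define S2 where "S2 = C \<inter> {x. x - z \<in> A}"
    define S3 where "S3 = A \<inter> {x. x - z \<in> \<Omega> - ?F}"
    define S4 where "S4 = A \<inter> {x. x - z \<in> UNIV - (\<Omega> \<union> ?F)}"
    define S5 where "S5 = (C \<inter> \<Omega>) \<inter> {x. x - z \<in> UNIV - (\<Omega> \<union> ?F)}"
    have OF1: "\<Omega> - ?F \<in> sets borel" using O F by auto
    have OF2: "UNIV - (\<Omega> \<union> ?F) \<in> sets borel" using O F sets.compl_sets[of "\<Omega> \<union> ?F" borel] by auto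
    have b1: "S1 \<in> sets borel" unfolding S1_def using C pre_borel[OF OF1] by auto
    have b2: "S2 \<in> sets borel" unfolding S2_def using C pre_borel[OF A] by auto
    have b3: "S3 \<in> sets borel" unfolding S3_def using A pre_borel[OF OF1] by auto
    have b4: "S4 \<in> sets borel" unfolding S4_def using A pre_borel[OF OF2] by auto
    have b5: "S5 \<in> sets borel" unfolding S5_def using C O pre_borel[OF OF2] by auto
    have ms: "S1 \<in> sets lebesgue" "S2 \<in> sets lebesgue" "S3 \<in> sets lebesgue" "S4 \<in> sets lebesgue" "S5 \<in> sets lebesgue"
      using b1 b2 b3 b4 b5 by (auto intro: sets_completionI_sets)
    have e1: "?m C (\<Omega> - C) z = emeasure lebesgue S1 + emeasure lebesgue S2"
    proof -
      have "C \<inter> {x. x - z \<in> \<Omega> - C} = S1 \<union> S2" unfolding S1_def S2_def using AO dj by auto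
      moreover have "emeasure lebesgue (S1 \<union> S2) = emeasure lebesgue S1 + emeasure lebesgue S2"
        using ms by (intro plus_emeasure[symmetric]) (auto simp: S1_def S2_def)
      ultimately show ?thesis by simp
    qed
    have e2: "?m (C \<inter> \<Omega>) (UNIV - (\<Omega> \<union> C)) z = emeasure lebesgue S5"
    proof -
      have "(C \<inter> \<Omega>) \<inter> {x. x - z \<in> UNIV - (\<Omega> \<union> C)} = S5" unfolding S5_def using AO by auto
      then show ?thesis by simp
    qed
    have e3: "?m ?F (\<Omega> - ?F) z = emeasure lebesgue S1 + emeasure lebesgue S3"
    proof -
      have "?F \<inter> {x. x - z \<in> \<Omega> - ?F} = S1 \<union> S3" unfolding S1_def S3_def by auto
      moreover have "emeasure lebesgue (S1 \<union> S3) = emeasure lebesgue S1 + emeasure lebesgue S3"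
        using ms dj by (intro plus_emeasure[symmetric]) (auto simp: S1_def S3_def)
      ultimately show ?thesis by simp
    qed
    have e4: "?m (?F \<inter> \<Omega>) (UNIV - (\<Omega> \<union> ?F)) z = emeasure lebesgue S5 + emeasure lebesgue S4"
    proof -
      have "(?F \<inter> \<Omega>) \<inter> {x. x - z \<in> UNIV - (\<Omega> \<union> ?F)} = S5 \<union> S4" unfolding S5_def S4_def using AO by auto
      moreover have "emeasure lebesgue (S5 \<union> S4) = emeasure lebesgue S5 + emeasure lebesgue S4"
        using ms dj by (intro plus_emeasure[symmetric]) (auto simp: S5_def S4_def)
      ultimately show ?thesis by simp
    qed
    have core: "emeasure lebesgue S2 \<le> emeasure lebesgue S3 + emeasure lebesgue S4"
    proof -
      have Cl: "C \<in> sets lebesgue" "A \<in> sets lebesgue" using C A by auto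
      have "emeasure lebesgue S2 \<le> emeasure lebesgue (A \<inter> {x. x - z \<notin> C \<union> A})"
        unfolding S2_def by (rule core_ineq[OF Cl cv bd dj])
      also have "A \<inter> {x. x - z \<notin> C \<union> A} = S3 \<union> S4" unfolding S3_def S4_def by auto
      also have "emeasure lebesgue (S3 \<union> S4) = emeasure lebesgue S3 + emeasure lebesgue S4"
        using ms by (intro plus_emeasure[symmetric]) (auto simp: S3_def S4_def)
      finally show ?thesis .
    qed
    have "emeasure lebesgue S1 + emeasure lebesgue S2 + emeasure lebesgue S5
       \<le> emeasure lebesgue S1 + (emeasure lebesgue S3 + emeasure lebesgue S4) + emeasure lebesgue S5"
      using core by (intro add_mono) auto
    also have "\<dots> = (emeasure lebesgue S1 + emeasure lebesgue S3) + (emeasure lebesgue S5 + emeasure lebesgue S4)"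
      by (simp add: ac_simps)
    finally show ?thesis unfolding e1 e2 e3 e4 .
  qed
  have "perK K C \<Omega> = (\<integral>\<^sup>+z. g' z * ?m C (\<Omega> - C) z + g' z * ?m (C \<inter> \<Omega>) (UNIV - (\<Omega> \<union> C)) z \<partial>lborel)"
    by (rule perK_form[OF C O g'b ae])
  also have "\<dots> \<le> (\<integral>\<^sup>+z. g' z * ?m ?F (\<Omega> - ?F) z + g' z * ?m (?F \<inter> \<Omega>) (UNIV - (\<Omega> \<union> ?F)) z \<partial>lborel)"
    by (intro nn_integral_mono ennreal_mix pw)
  also have "\<dots> = perK K ?F \<Omega>"
    by (rule perK_form[OF F O g'b ae, symmetric])
  finally show ?thesis .
qed

lemma null_inv:
  fixes K :: "'a::euclidean_space \<Rightarrow> real"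
  assumes N: "N \<in> null_sets lebesgue" and s1: "E - E' \<subseteq> N" and s2: "E' - E \<subseteq> N"
  shows "perK K E \<Omega> = perK K E' \<Omega>"
proof -
  have ae: "AE x in lebesgue. x \<notin> N" by (rule AE_not_in[OF N])
  have i1: "(\<integral>\<^sup>+y. indicator (\<Omega> - E) y * ennreal (K (x - y)) \<partial>lebesgue)
          = (\<integral>\<^sup>+y. indicator (\<Omega> - E') y * ennreal (K (x - y)) \<partial>lebesgue)" for x
    by (intro nn_integral_cong_AE, rule eventually_mono[OF ae]) (use s1 s2 in \<open>auto simp: indicator_def\<close>)
  have i2: "(\<integral>\<^sup>+y. indicator (UNIV - (\<Omega> \<union> E)) y * ennreal (K (x - y)) \<partial>lebesgue)
          = (\<integral>\<^sup>+y. indicator (UNIV - (\<Omega> \<union> E')) y * ennreal (K (x - y)) \<partial>lebesgue)" for x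
    by (intro nn_integral_cong_AE, rule eventually_mono[OF ae]) (use s1 s2 in \<open>auto simp: indicator_def\<close>)
  show ?thesis unfolding perK_def i1 i2
    by (intro arg_cong2[where f="(+)"] nn_integral_cong_AE; rule eventually_mono[OF ae])
       (use s1 s2 in \<open>auto simp: indicator_def\<close>)
qed

theorem mainTheorem2:
  fixes K :: "'a::euclidean_space \<Rightarrow> real" and C :: "'a set" and R :: real
  assumes "admissible_kernel K" and "closed C" and "convex C" and "R > 0"
  shows "outward_minimizing K C (ball 0 R)"
  unfolding outward_minimizing_def
proof (intro allI impI, elim conjE)
  fix F assume Fm: "F \<in> sets lebesgue" and CF: "C \<subseteq> F" and cc: "compactly_contained (F - C) (ball 0 R)"
  have K: "K \<in> borel_measurable lebesgue" using assms(1) unfolding admissible_kernel_def by blast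
  obtain S N N' where FS: "F = S \<union> N" and NN: "N \<subseteq> N'" and N': "N' \<in> null_sets lborel"
    and S: "S \<in> sets lborel" using sets_completionE[OF Fm] by blast
  have Cb: "C \<in> sets borel" using assms(2) by (rule borel_closed)
  have Ob: "ball (0::'a) R \<in> sets borel" by (rule borel_open) simp
  have Sb: "S \<in> sets borel" using S by simp
  have Ab: "S - C \<in> sets borel" using Sb Cb by auto
  have sub: "F - C \<subseteq> ball 0 R" and bdF: "bounded (F - C)"
    using cc closure_subset[of "F - C"] compact_imp_bounded[of "closure (F - C)"]
      bounded_subset[of "closure (F - C)" "F - C"]
    unfolding compactly_contained_def by auto
  have le: "perK K C (ball 0 R) \<le> perK K (C \<union> (S - C)) (ball 0 R)"
    by (rule borel_case[OF K Cb Ab Ob assms(3)]) (use sub bdF FS in \<open>auto intro: bounded_subset\<close>)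
  have "perK K (C \<union> (S - C)) (ball 0 R) = perK K F (ball 0 R)"
    by (rule null_inv[OF null_sets_completionI[OF N']]) (use FS NN CF in auto)
  with le show "perK K C (ball 0 R) \<le> perK K F (ball 0 R)" by simp
qed

end
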